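(* Let $H>0$, $R(1,1)>0$, and let $l:[0,\infty)\to\mathbb{R}$ satisfy $l(0)=1$ and not be identically zero on $(0,\infty)$. Let $X$ be a centered $H$-self-similar Gaussian process whose covariance function satisfies \[ R(s,t)=R(1,1)\,(s\wedge t)^{2H}\,l\!\left(\frac{|s-t|}{s\wedge t}\right),\qquad s,t>0. \] If $X$ is a Markov process, then there exists a (finite) $c\leq -H$ such that for every $\alpha\in(0,1)$, \[ l(t^{1-\alpha}-1)=t^{2H+c-\alpha(2H+c)},\qquad t\geq1. \]
   Context: A stochastic process $(X_t)_{t\geq0}$ is called $H$-self-similar with exponent $H>0$ if it is stochastically continuous at $0$ and, for every $a>0$, the process $(X_{at})_{t\geq0}$ has the same law as $(a^HX_t)_{t\geq0}$. *)

theory Defs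
  imports "HOL-Probability.Probability"
begin

text \<open>Processes are indexed by real time; only times t >= 0 are relevant.\<close>

definition gaussian_rv :: "'a measure \<Rightarrow> ('a \<Rightarrow> real) \<Rightarrow> bool" where
  "gaussian_rv M Y \<longleftrightarrow> Y \<in> borel_measurable M \<and>
     ((\<exists>\<mu> \<sigma>. \<sigma> > 0 \<and> distributed M lborel Y (normal_density \<mu> \<sigma>))
      \<or> (\<exists>c. AE \<omega> in M. Y \<omega> = c))"

text \<open>Gaussian process on [0,oo): every finite linear combination is Gaussian
  (equivalently all finite-dimensional distributions are multivariate normal).\<close>
definition gaussian_process :: "'a measure \<Rightarrow> (real \<Rightarrow> 'a \<Rightarrow> real) \<Rightarrow> bool" where
  "gaussian_process M X \<longleftrightarrow>
     (\<forall>t\<ge>0. X t \<in> borel_measurable M) \<and>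
     (\<forall>I a. finite I \<longrightarrow> I \<subseteq> {0..} \<longrightarrow> gaussian_rv M (\<lambda>\<omega>. \<Sum>i\<in>I. a i * X i \<omega>))"

definition centered_process :: "'a measure \<Rightarrow> (real \<Rightarrow> 'a \<Rightarrow> real) \<Rightarrow> bool" where
  "centered_process M X \<longleftrightarrow> (\<forall>t\<ge>0. integrable M (X t) \<and> integral\<^sup>L M (X t) = 0)"

definition process_law :: "'a measure \<Rightarrow> (real \<Rightarrow> 'a \<Rightarrow> real) \<Rightarrow> (real \<Rightarrow> real) measure" where
  "process_law M X = distr M (Pi\<^sub>M {0..} (\<lambda>_. borel)) (\<lambda>\<omega>. \<lambda>t\<in>{0..}. X t \<omega>)"

definition self_similar :: "'a measure \<Rightarrow> real \<Rightarrow> (real \<Rightarrow> 'a \<Rightarrow> real) \<Rightarrow> bool" where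
  "self_similar M H X \<longleftrightarrow> H > 0 \<and>
     (\<forall>\<epsilon>>0. ((\<lambda>t. measure M {\<omega>\<in>space M. \<bar>X t \<omega> - X 0 \<omega>\<bar> > \<epsilon>}) \<longlongrightarrow> 0) (at_right 0)) \<and>
     (\<forall>a>0. process_law M (\<lambda>t. X (a * t)) = process_law M (\<lambda>t \<omega>. a powr H * X t \<omega>))"

definition gen_sigma :: "'a measure \<Rightarrow> (real \<Rightarrow> 'a \<Rightarrow> real) \<Rightarrow> real set \<Rightarrow> 'a measure" where
  "gen_sigma M X I = sigma (space M) {X u -` B \<inter> space M | u B. u \<in> I \<and> B \<in> sets borel}"

definition markov_process :: "'a measure \<Rightarrow> (real \<Rightarrow> 'a \<Rightarrow> real) \<Rightarrow> bool" where
  "markov_process M X \<longleftrightarrow>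
     (\<forall>s t B. 0 \<le> s \<longrightarrow> s \<le> t \<longrightarrow> B \<in> sets borel \<longrightarrow>
        (AE \<omega> in M.
          real_cond_exp M (gen_sigma M X {0..s}) (indicator {\<omega>\<in>space M. X t \<omega> \<in> B}) \<omega>
          = real_cond_exp M (gen_sigma M X {s}) (indicator {\<omega>\<in>space M. X t \<omega> \<in> B}) \<omega>))"

end

theory Submission
  imports Defs
begin


lemma gauss_char:
  assumes P: "prob_space M" and G: "gaussian_rv M Z" and E: "integral\<^sup>L M Z = 0"
  shows "integrable M (\<lambda>\<omega>. (Z \<omega>)^2)"
    and "\<And>x. (CLINT \<omega>|M. iexp (x * Z \<omega>)) = complex_of_real (exp (-(x^2 * (\<integral>\<omega>. (Z \<omega>)^2 \<partial>M)) / 2))"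
proof -
  interpret prob_space M by (fact P)
  have Zm[measurable]: "Z \<in> borel_measurable M" using G by (simp add: gaussian_rv_def)
  have "integrable M (\<lambda>\<omega>. (Z \<omega>)^2) \<and> (\<forall>x. (CLINT \<omega>|M. iexp (x * Z \<omega>)) = complex_of_real (exp (-(x^2 * (\<integral>\<omega>. (Z \<omega>)^2 \<partial>M)) / 2)))"
  proof (cases "\<exists>\<mu> \<sigma>. \<sigma> > 0 \<and> distributed M lborel Z (normal_density \<mu> \<sigma>)")
    case True
    then obtain m \<sigma> where s: "\<sigma> > 0" and D: "distributed M lborel Z (normal_density m \<sigma>)" by blast
    have "expectation Z = m" using normal_distributed_expectation[OF s D] .
    with E have m0: "m = 0" by simp
    have V: "variance Z = \<sigma>^2" using normal_distributed_variance[OF s D] .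
    hence I2: "(\<integral>\<omega>. (Z \<omega>)^2 \<partial>M) = \<sigma>^2" using E by simp
    have "integrable lborel (\<lambda>x. normal_density m \<sigma> x * (x - m)^2)"
      using integrable_normal_moment[OF s] by blast
    hence int2: "integrable M (\<lambda>\<omega>. (Z \<omega>)^2)"
      using distributed_integrable[OF D, of "\<lambda>x. x^2"] m0 by simp
    have W: "distributed M lborel (\<lambda>x. (Z x - m) / \<sigma>) std_normal_density"
      using normal_standard_normal_convert[OF s] D by simp
    hence W': "distributed M lborel (\<lambda>x. Z x / \<sigma>) std_normal_density" using m0 by simp
    have ch: "(CLINT \<omega>|M. iexp (x * Z \<omega>)) = complex_of_real (exp (-(x^2 * \<sigma>^2) / 2))" for x
    proof -
      have "(CLINT \<omega>|M. iexp (x * Z \<omega>)) = (CLINT \<omega>|M. iexp ((x*\<sigma>) * (Z \<omega> / \<sigma>)))"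
        using s by simp
      also have "\<dots> = (CLINT y|distr M lborel (\<lambda>x. Z x / \<sigma>). iexp ((x*\<sigma>) * y))"
        by (subst integral_distr) (use W' in \<open>auto simp: distributed_measurable\<close>)
      also have "\<dots> = char std_normal_distribution (x*\<sigma>)"
        unfolding char_def distributed_distr_eq_density[OF W'] by simp
      also have "\<dots> = complex_of_real (exp (-(x^2 * \<sigma>^2) / 2))"
        by (simp add: char_std_normal_distribution power_mult_distrib)
      finally show ?thesis .
    qed
    show ?thesis using int2 ch I2 by simp
  next
    case False
    then obtain c where c: "AE \<omega> in M. Z \<omega> = c" using G by (auto simp: gaussian_rv_def)
    have "integral\<^sup>L M Z = integral\<^sup>L M (\<lambda>_. c)" by (rule integral_cong_AE) (use c in auto)
    hence c0: "c = 0" using E by (simp add: prob_space)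
    have A: "AE \<omega> in M. (Z \<omega>)^2 = 0" using c c0 by auto
    have "integrable M (\<lambda>\<omega>. (Z \<omega>)^2)"
      by (rule integrable_cong_AE[THEN iffD2, of _ _ "\<lambda>_. 0"]) (use A in auto)
    moreover have "(\<integral>\<omega>. (Z \<omega>)^2 \<partial>M) = 0"
      using integral_cong_AE[of "\<lambda>\<omega>. (Z \<omega>)^2" M "\<lambda>_. 0"] A by simp
    moreover have "(CLINT \<omega>|M. iexp (x * Z \<omega>)) = 1" for x
    proof -
      have "(CLINT \<omega>|M. iexp (x * Z \<omega>)) = (CLINT \<omega>|M. 1)"
        by (rule integral_cong_AE) (use c c0 in auto)
      thus ?thesis by (simp add: prob_space)
    qed
    ultimately show ?thesis by simp
  qed
  thus "integrable M (\<lambda>\<omega>. (Z \<omega>)^2)"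
    "\<And>x. (CLINT \<omega>|M. iexp (x * Z \<omega>)) = complex_of_real (exp (-(x^2 * (\<integral>\<omega>. (Z \<omega>)^2 \<partial>M)) / 2))" by auto
qed



lemma iexp_bound2: "cmod (iexp x - (1 + \<i> * x)) \<le> x^2 / 2"
proof -
  have "cmod (iexp x - (\<Sum>k \<le> Suc 0. (\<i> * x)^k / fact k)) \<le> \<bar>x\<bar>^(Suc (Suc 0)) / fact (Suc (Suc 0))"
    by (rule iexp_approx1)
  thus ?thesis by (simp add: power2_eq_square)
qed

lemma orth_char:
  assumes P: "prob_space M" and Um[measurable]: "U \<in> borel_measurable M" and Vm[measurable]: "V \<in> borel_measurable M"
    and G: "\<And>a b. gaussian_rv M (\<lambda>\<omega>. a * U \<omega> + b * V \<omega>)"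
    and iU: "integrable M U" and iV: "integrable M V"
    and EU: "integral\<^sup>L M U = 0" and EV: "integral\<^sup>L M V = 0"
    and EUV: "(\<integral>\<omega>. U \<omega> * V \<omega> \<partial>M) = 0"
  shows "(CLINT \<omega>|M. complex_of_real (U \<omega>) * iexp (l * V \<omega>)) = 0"
proof -
  interpret prob_space M by (fact P)
  have EZ: "integral\<^sup>L M (\<lambda>\<omega>. a * U \<omega> + b * V \<omega>) = 0" for a b
    using iU iV EU EV by simp
  note GC = gauss_char[OF P G EZ]
  have iU2: "integrable M (\<lambda>\<omega>. (U \<omega>)^2)" using GC(1)[of 1 0] by simp
  have iV2: "integrable M (\<lambda>\<omega>. (V \<omega>)^2)" using GC(1)[of 0 1] by simp
  have iUV: "integrable M (\<lambda>\<omega>. U \<omega> * V \<omega>)"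
  proof (rule Bochner_Integration.integrable_bound[OF Bochner_Integration.integrable_add[OF iU2 iV2]])
    show "AE x in M. norm (U x * V x) \<le> norm ((U x)^2 + (V x)^2)"
    proof (intro AE_I2)
      fix x
      have "2 * \<bar>U x * V x\<bar> \<le> (U x)^2 + (V x)^2"
      proof -
        have h: "0 \<le> (\<bar>U x\<bar> - \<bar>V x\<bar>)^2" by simp
        thus ?thesis by (simp add: power2_eq_square algebra_simps abs_mult abs_mult_self_eq)
      qed
      thus "norm (U x * V x) \<le> norm ((U x)^2 + (V x)^2)" by simp
    qed
  qed simp
  define A where "A = (\<integral>\<omega>. (U \<omega>)^2 \<partial>M)"
  define B where "B = (\<integral>\<omega>. (V \<omega>)^2 \<partial>M)"
  have A0: "A \<ge> 0" unfolding A_def by simp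
  have B0: "B \<ge> 0" unfolding B_def by simp
  have sq: "(\<integral>\<omega>. (a * U \<omega> + b * V \<omega>)^2 \<partial>M) = a^2 * A + b^2 * B" for a b
  proof -
    have "(\<lambda>\<omega>. (a * U \<omega> + b * V \<omega>)^2) = (\<lambda>\<omega>. a^2 * (U \<omega>)^2 + (2*a*b) * (U \<omega> * V \<omega>) + b^2 * (V \<omega>)^2)"
      by (auto simp: power2_eq_square algebra_simps)
    hence "(\<integral>\<omega>. (a * U \<omega> + b * V \<omega>)^2 \<partial>M) = a^2 * A + (2*a*b) * (\<integral>\<omega>. U \<omega> * V \<omega> \<partial>M) + b^2 * B"
      using iU2 iV2 iUV by (simp add: A_def B_def)
    thus ?thesis using EUV by simp
  qed
  have ch: "(CLINT \<omega>|M. iexp (a * U \<omega> + b * V \<omega>)) = complex_of_real (exp (-(a^2 * A + b^2 * B) / 2))" for a b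
    using GC(2)[of 1 a b] sq[of a b] by simp
  define c where "c = (CLINT \<omega>|M. complex_of_real (U \<omega>) * iexp (l * V \<omega>))"
  have ic: "integrable M (\<lambda>\<omega>. complex_of_real (U \<omega>) * iexp (l * V \<omega>))"
    by (rule Bochner_Integration.integrable_bound[OF iU]) (auto simp: norm_mult)
  have bnd: "cmod c \<le> \<mu> * A" if \<mu>: "\<mu> > 0" for \<mu>
  proof -
    define D where "D = (CLINT \<omega>|M. (iexp (\<mu> * U \<omega>) - (1 + \<i> * (\<mu> * U \<omega>))) * iexp (l * V \<omega>))"
    have i1: "integrable M (\<lambda>\<omega>. iexp (\<mu> * U \<omega>) * iexp (l * V \<omega>))"
      by (rule integrable_const_bound[where B=1]) (auto simp: norm_mult)
    have i2: "integrable M (\<lambda>\<omega>. iexp (l * V \<omega>))"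
      by (rule integrable_const_bound[where B=1]) auto
    have i3: "integrable M (\<lambda>\<omega>. (\<i> * \<mu>) * (complex_of_real (U \<omega>) * iexp (l * V \<omega>)))"
      using ic by simp
    have eq: "(\<lambda>\<omega>. (iexp (\<mu> * U \<omega>) - (1 + \<i> * (\<mu> * U \<omega>))) * iexp (l * V \<omega>)) =
       (\<lambda>\<omega>. iexp (\<mu> * U \<omega>) * iexp (l * V \<omega>) - iexp (l * V \<omega>) - (\<i> * \<mu>) * (complex_of_real (U \<omega>) * iexp (l * V \<omega>)))"
      by (auto simp: algebra_simps)
    have "D = (CLINT \<omega>|M. iexp (\<mu> * U \<omega>) * iexp (l * V \<omega>)) - (CLINT \<omega>|M. iexp (l * V \<omega>)) - (\<i> * \<mu>) * c"
      unfolding D_def eq c_def using i1 i2 i3 by simp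
    also have "(CLINT \<omega>|M. iexp (\<mu> * U \<omega>) * iexp (l * V \<omega>)) = complex_of_real (exp (-(\<mu>^2 * A + l^2 * B) / 2))"
    proof -
      have "(\<lambda>\<omega>. iexp (\<mu> * U \<omega>) * iexp (l * V \<omega>)) = (\<lambda>\<omega>. iexp (\<mu> * U \<omega> + l * V \<omega>))"
        by (auto simp: exp_add[symmetric] algebra_simps)
      thus ?thesis using ch[of \<mu> l] by simp
    qed
    also have "(CLINT \<omega>|M. iexp (l * V \<omega>)) = complex_of_real (exp (-(l^2 * B) / 2))"
      using ch[of 0 l] by simp
    finally have De: "(\<i> * \<mu>) * c = complex_of_real (exp (-(\<mu>^2 * A + l^2 * B) / 2) - exp (-(l^2 * B) / 2)) - D"
      by (simp add: algebra_simps)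
    have Db: "cmod D \<le> \<mu>^2 * A / 2"
    proof -
      have "cmod D \<le> (\<integral>\<omega>. norm ((iexp (\<mu> * U \<omega>) - (1 + \<i> * (\<mu> * U \<omega>))) * iexp (l * V \<omega>)) \<partial>M)"
        unfolding D_def by (rule integral_norm_bound)
      also have "\<dots> \<le> (\<integral>\<omega>. (\<mu> * U \<omega>)^2 / 2 \<partial>M)"
      proof (rule integral_mono)
        show "integrable M (\<lambda>\<omega>. (\<mu> * U \<omega>)^2 / 2)" using iU2 by (simp add: power_mult_distrib)
        show "integrable M (\<lambda>\<omega>. norm ((iexp (\<mu> * U \<omega>) - (1 + \<i> * (\<mu> * U \<omega>))) * iexp (l * V \<omega>)))"
        proof (rule Bochner_Integration.integrable_bound[OF \<open>integrable M (\<lambda>\<omega>. (\<mu> * U \<omega>)^2 / 2)\<close>])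
          show "AE x in M. norm (norm ((iexp (\<mu> * U x) - (1 + \<i> * (\<mu> * U x))) * iexp (l * V x))) \<le> norm ((\<mu> * U x)^2 / 2)"
          proof (intro AE_I2)
            fix x show "norm (norm ((iexp (\<mu> * U x) - (1 + \<i> * (\<mu> * U x))) * iexp (l * V x))) \<le> norm ((\<mu> * U x)^2 / 2)"
              using iexp_bound2[of "\<mu> * U x"] by (simp add: norm_mult)
          qed
        qed simp
        show "norm ((iexp (\<mu> * U \<omega>) - (1 + \<i> * (\<mu> * U \<omega>))) * iexp (l * V \<omega>)) \<le> (\<mu> * U \<omega>)^2 / 2" for \<omega>
          using iexp_bound2[of "\<mu> * U \<omega>"] by (simp add: norm_mult)
      qed
      also have "\<dots> = \<mu>^2 * A / 2" unfolding A_def by (simp add: power_mult_distrib)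
      finally show ?thesis .
    qed
    have Eb: "\<bar>exp (-(\<mu>^2 * A + l^2 * B) / 2) - exp (-(l^2 * B) / 2)\<bar> \<le> \<mu>^2 * A / 2"
    proof -
      have e: "exp (-(\<mu>^2 * A + l^2 * B) / 2) = exp (-(l^2 * B) / 2) * exp (-(\<mu>^2 * A) / 2)"
        by (simp add: exp_add[symmetric] field_simps)
      have e1: "exp (-(\<mu>^2 * A) / 2) \<le> 1" using A0 by simp
      have e2: "1 - \<mu>^2 * A / 2 \<le> exp (-(\<mu>^2 * A) / 2)" using exp_ge_add_one_self[of "-(\<mu>^2 * A) / 2"] by simp
      have e3: "exp (-(l^2 * B) / 2) \<le> 1" using B0 by simp
      have e4: "0 < exp (-(l^2 * B) / 2)" by simp
      have "\<bar>exp (-(l^2 * B) / 2) * exp (-(\<mu>^2 * A) / 2) - exp (-(l^2 * B) / 2)\<bar>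
           = exp (-(l^2 * B) / 2) * (1 - exp (-(\<mu>^2 * A) / 2))"
        using e1 e4 by (simp add: algebra_simps abs_if mult_le_cancel_left1)
      also have "\<dots> \<le> 1 * (1 - exp (-(\<mu>^2 * A) / 2))"
        using e1 e3 by (intro mult_right_mono) auto
      also have "\<dots> \<le> \<mu>^2 * A / 2" using e2 by simp
      finally show ?thesis using e by simp
    qed
    have "\<mu> * cmod c = cmod ((\<i> * \<mu>) * c)" using \<mu> by (simp add: norm_mult)
    also have "\<dots> \<le> cmod (complex_of_real (exp (-(\<mu>^2 * A + l^2 * B) / 2) - exp (-(l^2 * B) / 2))) + cmod D"
      unfolding De by (rule norm_triangle_ineq4)
    also have "\<dots> \<le> \<mu>^2 * A / 2 + \<mu>^2 * A / 2" using Eb Db by (simp del: of_real_diff add: mult.commute)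
    finally have "\<mu> * cmod c \<le> \<mu> * (\<mu> * A)" by (simp add: power2_eq_square mult_ac)
    thus ?thesis using \<mu> by simp
  qed
  have "cmod c \<le> 0"
  proof (rule field_le_epsilon)
    fix e :: real assume e: "e > 0"
    show "cmod c \<le> 0 + e"
    proof (cases "A = 0")
      case True thus ?thesis using bnd[of 1] e by simp
    next
      case False
      hence "A > 0" using A0 by simp
      thus ?thesis using bnd[of "e / A"] e by simp
    qed
  qed
  thus ?thesis unfolding c_def by simp
qed



lemma dens_dist:
  fixes g :: "'a \<Rightarrow> real"
  assumes ig: "integrable M g" and g0: "\<And>x. 0 \<le> g x" and g1: "integral\<^sup>L M g = 1"
    and Vm[measurable]: "V \<in> borel_measurable M"
  shows "real_distribution (distr (density M g) borel V)"
    and "char (distr (density M g) borel V) t = (CLINT \<omega>|M. g \<omega> *\<^sub>R iexp (t * V \<omega>))"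
    and "B \<in> sets borel \<Longrightarrow> (\<integral>x. indicator B x \<partial>distr (density M g) borel V) = (\<integral>\<omega>. g \<omega> * indicator B (V \<omega>) \<partial>M)"
proof -
  have gm[measurable]: "g \<in> borel_measurable M" using ig by auto
  have "prob_space (density M g)"
  proof
    have "emeasure (density M g) (space (density M g)) = (\<integral>\<^sup>+ x. ennreal (g x) * indicator (space M) x \<partial>M)"
      by (simp add: emeasure_density)
    also have "\<dots> = (\<integral>\<^sup>+ x. ennreal (g x) \<partial>M)"
      by (rule nn_integral_cong) auto
    also have "\<dots> = ennreal (integral\<^sup>L M g)"
      by (rule nn_integral_eq_integral[OF ig]) (simp add: g0)
    finally show "emeasure (density M g) (space (density M g)) = 1" using g1 by simp
  qed
  then show "real_distribution (distr (density M g) borel V)"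
    unfolding real_distribution_def real_distribution_axioms_def
    by (auto intro!: prob_space.prob_space_distr)
  show "char (distr (density M g) borel V) t = (CLINT \<omega>|M. g \<omega> *\<^sub>R iexp (t * V \<omega>))"
    unfolding char_def by (simp add: integral_distr integral_density g0)
  assume [measurable]: "B \<in> sets borel"
  show "(\<integral>x. indicator B x \<partial>distr (density M g) borel V) = (\<integral>\<omega>. g \<omega> * indicator B (V \<omega>) \<partial>M)"
    by (subst integral_distr; (subst integral_density)?; simp add: g0)
qed

lemma gauss_orth:
  assumes P: "prob_space M" and Um[measurable]: "U \<in> borel_measurable M" and Vm[measurable]: "V \<in> borel_measurable M"
    and G: "\<And>a b. gaussian_rv M (\<lambda>\<omega>. a * U \<omega> + b * V \<omega>)"
    and iU: "integrable M U" and iV: "integrable M V"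
    and EU: "integral\<^sup>L M U = 0" and EV: "integral\<^sup>L M V = 0"
    and EUV: "(\<integral>\<omega>. U \<omega> * V \<omega> \<partial>M) = 0"
    and B[measurable]: "B \<in> sets borel"
  shows "(\<integral>\<omega>. U \<omega> * indicator B (V \<omega>) \<partial>M) = 0"
proof -
  interpret prob_space M by (fact P)
  note c0 = orth_char[OF P Um Vm G iU iV EU EV EUV]
  define Up where "Up = (\<lambda>\<omega>. max (U \<omega>) 0)"
  define Uq where "Uq = (\<lambda>\<omega>. max (- U \<omega>) 0)"
  have Upm[measurable]: "Up \<in> borel_measurable M" "Uq \<in> borel_measurable M" unfolding Up_def Uq_def by auto
  have iUp: "integrable M Up" unfolding Up_def using iU by auto
  have iUn: "integrable M Uq" unfolding Uq_def using iU by auto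
  have UUp: "U \<omega> = Up \<omega> - Uq \<omega>" for \<omega> unfolding Up_def Uq_def by auto
  have Up0: "0 \<le> Up \<omega>" "0 \<le> Uq \<omega>" for \<omega> unfolding Up_def Uq_def by auto
  have "integral\<^sup>L M U = integral\<^sup>L M Up - integral\<^sup>L M Uq"
    unfolding UUp using iUp iUn by simp
  hence eqm: "integral\<^sup>L M Up = integral\<^sup>L M Uq" using EU by simp
  define m where "m = integral\<^sup>L M Up"
  have m0: "m \<ge> 0" unfolding m_def using Up0 by simp
  have iUpB: "integrable M (\<lambda>\<omega>. Up \<omega> * indicator B (V \<omega>))"
    by (rule Bochner_Integration.integrable_bound[OF iUp]) (auto simp: Up0 indicator_def)
  have iUnB: "integrable M (\<lambda>\<omega>. Uq \<omega> * indicator B (V \<omega>))"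
    by (rule Bochner_Integration.integrable_bound[OF iUn]) (auto simp: Up0 indicator_def)
  have split: "(\<integral>\<omega>. U \<omega> * indicator B (V \<omega>) \<partial>M) =
      (\<integral>\<omega>. Up \<omega> * indicator B (V \<omega>) \<partial>M) - (\<integral>\<omega>. Uq \<omega> * indicator B (V \<omega>) \<partial>M)"
    unfolding UUp left_diff_distrib using iUpB iUnB by simp
  show ?thesis
  proof (cases "m = 0")
    case True
    have "AE \<omega> in M. Up \<omega> = 0"
      using integral_nonneg_eq_0_iff_AE[OF iUp] True Up0 unfolding m_def by auto
    moreover have "AE \<omega> in M. Uq \<omega> = 0"
      using integral_nonneg_eq_0_iff_AE[OF iUn] True eqm Up0 unfolding m_def by auto
    ultimately have "AE \<omega> in M. U \<omega> * indicator B (V \<omega>) = 0" using UUp by auto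
    hence "(\<integral>\<omega>. U \<omega> * indicator B (V \<omega>) \<partial>M) = (\<integral>\<omega>. 0 \<partial>M)"
      by (intro integral_cong_AE) auto
    thus ?thesis by simp
  next
    case False
    hence mp: "m > 0" using m0 by simp
    define gp where "gp = (\<lambda>\<omega>. Up \<omega> / m)"
    define gn where "gn = (\<lambda>\<omega>. Uq \<omega> / m)"
    have gpm[measurable]: "gp \<in> borel_measurable M" "gn \<in> borel_measurable M" unfolding gp_def gn_def by auto
    have igp: "integrable M gp" "integrable M gn" unfolding gp_def gn_def using iUp iUn by auto
    have gp0: "\<And>x. 0 \<le> gp x" "\<And>x. 0 \<le> gn x" unfolding gp_def gn_def using Up0 mp by auto
    have gp1: "integral\<^sup>L M gp = 1" "integral\<^sup>L M gn = 1"
      unfolding gp_def gn_def using mp eqm by (auto simp: m_def)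
    note Dp = dens_dist[OF igp(1) gp0(1) gp1(1) Vm]
    note Dn = dens_dist[OF igp(2) gp0(2) gp1(2) Vm]
    have "char (distr (density M gp) borel V) = char (distr (density M gn) borel V)"
    proof
      fix t
      have i1: "integrable M (\<lambda>\<omega>. gp \<omega> *\<^sub>R iexp (t * V \<omega>))"
        by (rule Bochner_Integration.integrable_bound[OF igp(1)]) (auto simp: gp0)
      have i2: "integrable M (\<lambda>\<omega>. gn \<omega> *\<^sub>R iexp (t * V \<omega>))"
        by (rule Bochner_Integration.integrable_bound[OF igp(2)]) (auto simp: gp0)
      have eq: "(\<lambda>\<omega>. gp \<omega> *\<^sub>R iexp (t * V \<omega>) - gn \<omega> *\<^sub>R iexp (t * V \<omega>))
          = (\<lambda>\<omega>. complex_of_real (1/m) * (complex_of_real (U \<omega>) * iexp (t * V \<omega>)))"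
        unfolding gp_def gn_def by (auto simp: UUp scaleR_conv_of_real algebra_simps diff_divide_distrib)
      have "char (distr (density M gp) borel V) t - char (distr (density M gn) borel V) t
          = (CLINT \<omega>|M. gp \<omega> *\<^sub>R iexp (t * V \<omega>) - gn \<omega> *\<^sub>R iexp (t * V \<omega>))"
        unfolding Dp(2) Dn(2) using i1 i2 by simp
      also have "\<dots> = 0" unfolding eq using c0[of t] by simp
      finally show "char (distr (density M gp) borel V) t = char (distr (density M gn) borel V) t" by simp
    qed
    hence "distr (density M gp) borel V = distr (density M gn) borel V"
      by (rule Levy_uniqueness[OF Dp(1) Dn(1)])
    hence "(\<integral>\<omega>. gp \<omega> * indicator B (V \<omega>) \<partial>M) = (\<integral>\<omega>. gn \<omega> * indicator B (V \<omega>) \<partial>M)"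
      using Dp(3)[OF B] Dn(3)[OF B] by simp
    hence "(\<integral>\<omega>. Up \<omega> * indicator B (V \<omega>) \<partial>M) / m = (\<integral>\<omega>. Uq \<omega> * indicator B (V \<omega>) \<partial>M) / m"
      unfolding gp_def gn_def by simp
    thus ?thesis using split mp by simp
  qed
qed



lemma int_prod:
  fixes f g :: "'a \<Rightarrow> real"
  assumes "integrable M (\<lambda>x. (f x)^2)" "integrable M (\<lambda>x. (g x)^2)"
    and [measurable]: "f \<in> borel_measurable M" "g \<in> borel_measurable M"
  shows "integrable M (\<lambda>x. f x * g x)"
proof (rule Bochner_Integration.integrable_bound[OF Bochner_Integration.integrable_add[OF assms(1,2)]])
  show "AE x in M. norm (f x * g x) \<le> norm ((f x)^2 + (g x)^2)"
  proof (intro AE_I2)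
    fix x
    have "2 * \<bar>f x * g x\<bar> \<le> (f x)^2 + (g x)^2"
    proof -
      have h: "0 \<le> (\<bar>f x\<bar> - \<bar>g x\<bar>)^2" by simp
      thus ?thesis by (simp add: power2_eq_square algebra_simps abs_mult abs_mult_self_eq)
    qed
    thus "norm (f x * g x) \<le> norm ((f x)^2 + (g x)^2)" by simp
  qed
qed simp

context
  fixes M :: "'a measure" and X :: "real \<Rightarrow> 'a \<Rightarrow> real"
  assumes P: "prob_space M" and Xm: "\<And>t. t \<ge> 0 \<Longrightarrow> X t \<in> borel_measurable M"
begin

lemma gen_gen_sub: "I \<subseteq> {0..} \<Longrightarrow> {X u -` B \<inter> space M | u B. u \<in> I \<and> B \<in> sets borel} \<subseteq> sets M"
  using Xm by (auto simp: measurable_def)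

lemma gen_space: "space (gen_sigma M X I) = space M"
  unfolding gen_sigma_def by (rule space_measure_of) auto

lemma gen_sets: "sets (gen_sigma M X I) = sigma_sets (space M) {X u -` B \<inter> space M | u B. u \<in> I \<and> B \<in> sets borel}"
  unfolding gen_sigma_def by (rule sets_measure_of) auto

lemma gen_subalg: assumes I: "I \<subseteq> {0..}" shows "subalgebra M (gen_sigma M X I)"
  unfolding subalgebra_def gen_space gen_sets
  using sets.sigma_sets_subset[OF gen_gen_sub[OF I]] by simp

lemma gen_sfs: "I \<subseteq> {0..} \<Longrightarrow> sigma_finite_subalgebra M (gen_sigma M X I)"
proof -
  assume I: "I \<subseteq> {0..}"
  interpret prob_space M by (fact P)
  have "finite_measure_subalgebra M (gen_sigma M X I)"
    by unfold_locales (rule gen_subalg[OF I])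
  thus ?thesis by (rule finite_measure_subalgebra_is_sigma_finite)
qed

lemma gen_meas: "u \<in> I \<Longrightarrow> X u \<in> borel_measurable (gen_sigma M X I)"
proof (rule measurableI)
  fix A :: "real set" assume u: "u \<in> I" and A: "A \<in> sets borel"
  have "X u -` A \<inter> space M \<in> {X u -` B \<inter> space M | u B. u \<in> I \<and> B \<in> sets borel}"
    using u A by blast
  thus "X u -` A \<inter> space (gen_sigma M X I) \<in> sets (gen_sigma M X I)"
    unfolding gen_space gen_sets by auto
qed auto

lemma gen_single: "sets (gen_sigma M X {u}) = {X u -` B \<inter> space M | B. B \<in> sets borel}"
proof -
  have "gen_sigma M X {u} = vimage_algebra (space M) (X u) borel"
    unfolding gen_sigma_def vimage_algebra_def by (rule arg_cong[where f="sigma (space M)"]) auto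
  thus ?thesis by (simp add: sets_vimage_algebra2)
qed

end



lemma factorization:
  assumes P: "prob_space M" and GP: "gaussian_process M X" and CP: "centered_process M X"
    and MK: "markov_process M X"
    and st: "0 < s" "s < u" "u < t" and Ruu: "(\<integral>\<omega>. X u \<omega> * X u \<omega> \<partial>M) > 0"
  shows "(\<integral>\<omega>. X s \<omega> * X t \<omega> \<partial>M) * (\<integral>\<omega>. X u \<omega> * X u \<omega> \<partial>M)
       = (\<integral>\<omega>. X s \<omega> * X u \<omega> \<partial>M) * (\<integral>\<omega>. X u \<omega> * X t \<omega> \<partial>M)"
proof -
  interpret prob_space M by (fact P)
  have Xm: "\<And>r. r \<ge> 0 \<Longrightarrow> X r \<in> borel_measurable M" using GP by (simp add: gaussian_process_def)
  have iX: "\<And>r. r \<ge> 0 \<Longrightarrow> integrable M (X r)" and EX: "\<And>r. r \<ge> 0 \<Longrightarrow> integral\<^sup>L M (X r) = 0"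
    using CP by (auto simp: centered_process_def)
  have gcomb: "gaussian_rv M (\<lambda>\<omega>. a * X p \<omega> + b * X q \<omega>)" if "0 \<le> p" "0 \<le> q" "p \<noteq> q" for a b p q
  proof -
    have "gaussian_rv M (\<lambda>\<omega>. \<Sum>i\<in>{p,q}. (\<lambda>i. if i = p then a else b) i * X i \<omega>)"
      using GP[unfolded gaussian_process_def, THEN conjunct2, rule_format, of "{p,q}" "\<lambda>i. if i = p then a else b"] that by auto
    thus ?thesis using that by simp
  qed
  have g1: "gaussian_rv M (X r)" if "0 \<le> r" for r
  proof -
    have "gaussian_rv M (\<lambda>\<omega>. \<Sum>i\<in>{r}. (\<lambda>_. 1) i * X i \<omega>)"
      using GP[unfolded gaussian_process_def, THEN conjunct2, rule_format, of "{r}" "\<lambda>_. 1"] that by auto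
    thus ?thesis by simp
  qed
  have iX2: "integrable M (\<lambda>\<omega>. (X r \<omega>)^2)" if "0 \<le> r" for r
    using gauss_char(1)[OF P g1[OF that] EX[OF that]] .
  have iXX: "integrable M (\<lambda>\<omega>. X p \<omega> * X q \<omega>)" if "0 \<le> p" "0 \<le> q" for p q
    using int_prod[OF iX2 iX2 Xm Xm] that by blast
  have s0: "0 \<le> s" and u0: "0 \<le> u" and t0: "0 \<le> t" using st by auto
  note [measurable] = Xm[OF s0] Xm[OF u0] Xm[OF t0]
  define b where "b = (\<integral>\<omega>. X s \<omega> * X u \<omega> \<partial>M) / (\<integral>\<omega>. X u \<omega> * X u \<omega> \<partial>M)"
  define U where "U = (\<lambda>\<omega>. X s \<omega> - b * X u \<omega>)"
  have Um[measurable]: "U \<in> borel_measurable M" unfolding U_def by simp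
  have iU: "integrable M U" unfolding U_def using iX[OF s0] iX[OF u0] by simp
  have EU: "integral\<^sup>L M U = 0" unfolding U_def using iX[OF s0] iX[OF u0] EX[OF s0] EX[OF u0] by simp
  have EUV: "(\<integral>\<omega>. U \<omega> * X u \<omega> \<partial>M) = 0"
  proof -
    have "(\<lambda>\<omega>. U \<omega> * X u \<omega>) = (\<lambda>\<omega>. X s \<omega> * X u \<omega> - b * (X u \<omega> * X u \<omega>))"
      unfolding U_def by (auto simp: algebra_simps)
    hence "(\<integral>\<omega>. U \<omega> * X u \<omega> \<partial>M) = (\<integral>\<omega>. X s \<omega> * X u \<omega> \<partial>M) - b * (\<integral>\<omega>. X u \<omega> * X u \<omega> \<partial>M)"
      using iXX[OF s0 u0] iXX[OF u0 u0] by simp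
    thus ?thesis unfolding b_def using Ruu by simp
  qed
  have GUV: "gaussian_rv M (\<lambda>\<omega>. a * U \<omega> + c * X u \<omega>)" for a c
  proof -
    have "(\<lambda>\<omega>. a * U \<omega> + c * X u \<omega>) = (\<lambda>\<omega>. a * X s \<omega> + (c - a * b) * X u \<omega>)"
      unfolding U_def by (auto simp: algebra_simps)
    thus ?thesis using gcomb[OF s0 u0, of a "c - a*b"] st by simp
  qed
  have orth: "(\<integral>\<omega>. U \<omega> * indicator C (X u \<omega>) \<partial>M) = 0" if C: "C \<in> sets borel" for C
    by (rule gauss_orth[OF P Um Xm[OF u0] GUV iU iX[OF u0] EU EX[OF u0] EUV C])
  define Fu where "Fu = gen_sigma M X {0..u}"
  define Gu where "Gu = gen_sigma M X {u}"
  define Gt where "Gt = gen_sigma M X {t}"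
  interpret Fu: sigma_finite_subalgebra M Fu unfolding Fu_def by (rule gen_sfs[OF P Xm]) auto
  interpret Gu: sigma_finite_subalgebra M Gu unfolding Gu_def by (rule gen_sfs[OF P Xm]) (use u0 in auto)
  interpret Gt: sigma_finite_subalgebra M Gt unfolding Gt_def by (rule gen_sfs[OF P Xm]) (use t0 in auto)
  have XsF[measurable]: "X s \<in> borel_measurable Fu" unfolding Fu_def by (rule gen_meas[OF P Xm]) (use st in auto)
  have XuG[measurable]: "X u \<in> borel_measurable Gu" unfolding Gu_def by (rule gen_meas[OF P Xm]) auto
  have XtG[measurable]: "X t \<in> borel_measurable Gt" unfolding Gt_def by (rule gen_meas[OF P Xm]) auto
  have ceX: "AE \<omega> in M. real_cond_exp M Gu (X s) \<omega> = b * X u \<omega>"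
  proof (rule Gu.real_cond_exp_charact)
    fix A assume A0: "A \<in> sets Gu"
    have "A \<in> {X u -` B \<inter> space M | B. B \<in> sets borel}"
      using A0 gen_single[OF P Xm, where u=u] unfolding Gu_def by simp
    then obtain C where C: "C \<in> sets borel" and A: "A = X u -` C \<inter> space M" by auto
    have Am[measurable]: "A \<in> sets M" using A0 Gu.subalg by (auto simp: subalgebra_def)
    have i1: "integrable M (\<lambda>\<omega>. indicator A \<omega> * X s \<omega>)"
      by (rule Bochner_Integration.integrable_bound[OF iX[OF s0]]) (auto simp: indicator_def)
    have i2: "integrable M (\<lambda>\<omega>. indicator A \<omega> * (b * X u \<omega>))"
      by (rule Bochner_Integration.integrable_bound[OF integrable_mult_right[OF iX[OF u0], of b]]) (auto simp: indicator_def)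
    have "(LINT \<omega>:A|M. X s \<omega>) - (LINT \<omega>:A|M. b * X u \<omega>)
        = (\<integral>\<omega>. indicator A \<omega> * X s \<omega> - indicator A \<omega> * (b * X u \<omega>) \<partial>M)"
      unfolding set_lebesgue_integral_def using i1 i2 by simp
    also have "\<dots> = (\<integral>\<omega>. U \<omega> * indicator C (X u \<omega>) \<partial>M)"
      by (rule Bochner_Integration.integral_cong) (auto simp: A U_def indicator_def)
    also have "\<dots> = 0" by (rule orth[OF C])
    finally show "(LINT \<omega>:A|M. X s \<omega>) = (LINT \<omega>:A|M. b * X u \<omega>)" by simp
  qed (use iX[OF s0] iX[OF u0] in auto)
  have key: "(\<integral>\<omega>. U \<omega> * indicator {\<omega>\<in>space M. X t \<omega> \<in> C} \<omega> \<partial>M) = 0" if C[measurable]: "C \<in> sets borel" for C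
  proof -
    define Ind :: "'a \<Rightarrow> real" where "Ind = indicator {\<omega>\<in>space M. X t \<omega> \<in> C}"
    have Indm[measurable]: "Ind \<in> borel_measurable M" unfolding Ind_def by simp
    have iInd: "integrable M Ind" by (rule integrable_const_bound[where B=1]) (auto simp: Ind_def indicator_def)
    define \<phi> where "\<phi> = real_cond_exp M Gu Ind"
    have \<phi>m[measurable]: "\<phi> \<in> borel_measurable Gu" "\<phi> \<in> borel_measurable M" unfolding \<phi>_def by auto
    have mk: "AE \<omega> in M. real_cond_exp M Fu Ind \<omega> = \<phi> \<omega>"
      using MK[unfolded markov_process_def, rule_format, of u t C] u0 st C unfolding Fu_def Gu_def \<phi>_def Ind_def by simp
    have ge: "AE \<omega> in M. \<phi> \<omega> \<ge> 0" unfolding \<phi>_def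
      by (rule Gu.real_cond_exp_ge_c[OF iInd]) (auto simp: Ind_def)
    have le: "AE \<omega> in M. \<phi> \<omega> \<le> 1" unfolding \<phi>_def
      by (rule Gu.real_cond_exp_le_c[OF iInd]) (auto simp: Ind_def indicator_def)
    have iXsI: "integrable M (\<lambda>\<omega>. X s \<omega> * Ind \<omega>)"
      by (rule Bochner_Integration.integrable_bound[OF iX[OF s0]]) (auto simp: Ind_def indicator_def)
    have iXuI: "integrable M (\<lambda>\<omega>. X u \<omega> * Ind \<omega>)"
      by (rule Bochner_Integration.integrable_bound[OF iX[OF u0]]) (auto simp: Ind_def indicator_def)
    have iphXs: "integrable M (\<lambda>\<omega>. \<phi> \<omega> * X s \<omega>)"
    proof (rule Bochner_Integration.integrable_bound[OF iX[OF s0]])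
      show "AE x in M. norm (\<phi> x * X s x) \<le> norm (X s x)"
        using ge le by eventually_elim (auto simp: abs_mult intro!: mult_left_le_one_le)
    qed simp
    have "(\<integral>\<omega>. X s \<omega> * Ind \<omega> \<partial>M) = (\<integral>\<omega>. X s \<omega> * real_cond_exp M Fu Ind \<omega> \<partial>M)"
      by (rule Fu.real_cond_exp_intg(2)[symmetric]) (use iXsI in auto)
    also have "\<dots> = (\<integral>\<omega>. X s \<omega> * \<phi> \<omega> \<partial>M)"
      by (rule integral_cong_AE) (use mk in auto)
    also have "\<dots> = (\<integral>\<omega>. \<phi> \<omega> * X s \<omega> \<partial>M)" by (simp add: mult.commute)
    also have "\<dots> = (\<integral>\<omega>. \<phi> \<omega> * real_cond_exp M Gu (X s) \<omega> \<partial>M)"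
      by (rule Gu.real_cond_exp_intg(2)[symmetric]) (use iphXs in auto)
    also have "\<dots> = (\<integral>\<omega>. \<phi> \<omega> * (b * X u \<omega>) \<partial>M)"
      by (rule integral_cong_AE) (use ceX in auto)
    also have "\<dots> = b * (\<integral>\<omega>. X u \<omega> * \<phi> \<omega> \<partial>M)" by (simp add: mult_ac)
    also have "(\<integral>\<omega>. X u \<omega> * \<phi> \<omega> \<partial>M) = (\<integral>\<omega>. X u \<omega> * Ind \<omega> \<partial>M)"
      unfolding \<phi>_def by (rule Gu.real_cond_exp_intg(2)) (use iXuI in auto)
    finally have e: "(\<integral>\<omega>. X s \<omega> * Ind \<omega> \<partial>M) = b * (\<integral>\<omega>. X u \<omega> * Ind \<omega> \<partial>M)" .
    have "(\<lambda>\<omega>. U \<omega> * Ind \<omega>) = (\<lambda>\<omega>. X s \<omega> * Ind \<omega> - b * (X u \<omega> * Ind \<omega>))"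
      unfolding U_def by (auto simp: algebra_simps)
    hence "(\<integral>\<omega>. U \<omega> * Ind \<omega> \<partial>M) = (\<integral>\<omega>. X s \<omega> * Ind \<omega> \<partial>M) - b * (\<integral>\<omega>. X u \<omega> * Ind \<omega> \<partial>M)"
      using iXsI iXuI by simp
    thus ?thesis using e unfolding Ind_def by simp
  qed
  have ceU: "AE \<omega> in M. real_cond_exp M Gt U \<omega> = 0"
  proof (rule Gt.real_cond_exp_charact)
    fix A assume A0: "A \<in> sets Gt"
    have "A \<in> {X t -` B \<inter> space M | B. B \<in> sets borel}"
      using A0 gen_single[OF P Xm, where u=t] unfolding Gt_def by simp
    then obtain C where C: "C \<in> sets borel" and A: "A = X t -` C \<inter> space M" by auto
    have Am[measurable]: "A \<in> sets M" using A0 Gt.subalg by (auto simp: subalgebra_def)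
    have "(LINT \<omega>:A|M. U \<omega>) = (\<integral>\<omega>. U \<omega> * indicator {\<omega>\<in>space M. X t \<omega> \<in> C} \<omega> \<partial>M)"
      unfolding set_lebesgue_integral_def
      by (rule Bochner_Integration.integral_cong) (auto simp: A indicator_def)
    also have "\<dots> = 0" by (rule key[OF C])
    finally show "(LINT \<omega>:A|M. U \<omega>) = (LINT \<omega>:A|M. 0)" by simp
  qed (use iU in auto)
  have iXtU: "integrable M (\<lambda>\<omega>. X t \<omega> * U \<omega>)"
  proof -
    have "(\<lambda>\<omega>. X t \<omega> * U \<omega>) = (\<lambda>\<omega>. X t \<omega> * X s \<omega> - b * (X t \<omega> * X u \<omega>))"
      unfolding U_def by (auto simp: algebra_simps)
    thus ?thesis using iXX[OF t0 s0] iXX[OF t0 u0] by simp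
  qed
  have "(\<integral>\<omega>. X t \<omega> * U \<omega> \<partial>M) = (\<integral>\<omega>. X t \<omega> * real_cond_exp M Gt U \<omega> \<partial>M)"
    by (rule Gt.real_cond_exp_intg(2)[symmetric]) (use iXtU in auto)
  also have "\<dots> = (\<integral>\<omega>. 0 \<partial>M)" by (rule integral_cong_AE) (use ceU in auto)
  finally have z: "(\<integral>\<omega>. X t \<omega> * U \<omega> \<partial>M) = 0" by simp
  have "(\<lambda>\<omega>. X t \<omega> * U \<omega>) = (\<lambda>\<omega>. X s \<omega> * X t \<omega> - b * (X u \<omega> * X t \<omega>))"
    unfolding U_def by (auto simp: algebra_simps)
  hence "(\<integral>\<omega>. X s \<omega> * X t \<omega> \<partial>M) = b * (\<integral>\<omega>. X u \<omega> * X t \<omega> \<partial>M)"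
    using z iXX[OF s0 t0] iXX[OF u0 t0] by simp
  thus ?thesis unfolding b_def using Ruu by (simp add: field_simps)
qed



lemma additive_bounded_linear:
  fixes h :: "real \<Rightarrow> real"
  assumes add: "\<And>a b. 0 \<le> a \<Longrightarrow> 0 \<le> b \<Longrightarrow> h (a + b) = h a + h b"
    and h1: "h 1 = 0"
    and bnd: "\<And>z. 0 \<le> z \<Longrightarrow> z \<le> 1 \<Longrightarrow> h z \<le> K"
    and y: "0 \<le> y"
  shows "h y = 0"
proof -
  have h0: "h 0 = 0" using add[of 0 0] by simp
  have hn: "h (of_nat n) = 0" for n
  proof (induction n)
    case (Suc n)
    have "h (of_nat (Suc n)) = h (of_nat n + 1)" by (simp add: add.commute)
    also have "\<dots> = h (of_nat n) + h 1" by (rule add) auto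
    finally show ?case using Suc h1 by simp
  qed (simp add: h0)
  have hmul: "h (of_nat n * z) = of_nat n * h z" if "0 \<le> z" for n z
  proof (induction n)
    case (Suc n)
    have "h (of_nat (Suc n) * z) = h (of_nat n * z + z)" by (simp add: algebra_simps)
    also have "\<dots> = h (of_nat n * z) + h z" by (rule add) (use that in auto)
    finally show ?case using Suc by (simp add: algebra_simps)
  qed (simp add: h0)
  have pos: "\<not> h w > 0" if w: "0 \<le> w" for w
  proof
    assume d: "h w > 0"
    obtain n :: nat where n: "of_nat n * h w > K" using reals_Archimedean3[OF d] by blast
    define k where "k = nat (floor (of_nat n * w))"
    define z where "z = of_nat n * w - of_nat k"
    have fl: "of_int (floor (of_nat n * w)) \<le> of_nat n * w" "of_nat n * w < of_int (floor (of_nat n * w)) + 1"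
      by linarith+
    have fl0: "floor (of_nat n * w) \<ge> 0" using w by simp
    hence kk: "(of_nat k :: real) = of_int (floor (of_nat n * w))" unfolding k_def by simp
    have z0: "0 \<le> z" "z \<le> 1" unfolding z_def using fl kk by linarith+
    have "h (of_nat n * w) = h (z + of_nat k)" unfolding z_def by simp
    also have "\<dots> = h z + h (of_nat k)" by (rule add) (use z0 in auto)
    finally have "h z = of_nat n * h w" using hn hmul[OF w] by simp
    thus False using bnd[OF z0] n by simp
  qed
  have neg: "\<not> h y < 0"
  proof
    assume d: "h y < 0"
    define k where "k = nat (ceiling y)"
    have kk: "(of_nat k :: real) \<ge> y" unfolding k_def by linarith
    have "h (of_nat k) = h ((of_nat k - y) + y)" by simp
    also have "\<dots> = h (of_nat k - y) + h y" by (rule add) (use kk y in auto)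
    finally have "h (of_nat k - y) > 0" using hn d by simp
    thus False using pos[of "of_nat k - y"] kk by simp
  qed
  show ?thesis using pos[OF y] neg by simp
qed

lemma mult_fun_solve:
  fixes f :: "real \<Rightarrow> real"
  assumes mult: "\<And>a b. 1 \<le> a \<Longrightarrow> 1 \<le> b \<Longrightarrow> f (a * b) = f a * f b"
    and bnd: "\<And>x. 1 \<le> x \<Longrightarrow> (f x)^2 \<le> x powr (2 * H)"
    and nz: "\<exists>x>1. f x \<noteq> 0"
  shows "\<exists>d \<le> H. \<forall>x\<ge>1. f x = x powr d"
proof -
  obtain x0 where x0: "x0 > 1" "f x0 \<noteq> 0" using nz by blast
  have sq: "f x = (f (sqrt x))^2" if "1 \<le> x" for x
    using mult[of "sqrt x" "sqrt x"] that by (simp add: power2_eq_square)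
  have nonneg: "f x \<ge> 0" if "1 \<le> x" for x using sq[OF that] by simp
  have zero_up: "f z = 0" if "f y = 0" "1 \<le> y" "y \<le> z" for y z
  proof -
    have "f z = f (y * (z / y))" using that by simp
    also have "\<dots> = f y * f (z / y)" by (rule mult) (use that in auto)
    finally show ?thesis using that by simp
  qed
  have posf: "f x > 0" if x: "1 \<le> x" for x
  proof (rule ccontr)
    assume "\<not> f x > 0"
    hence fx: "f x = 0" using nonneg[OF x] by simp
    have rt: "f (x powr (1 / 2^n)) = 0" for n :: nat
    proof (induction n)
      case 0 thus ?case using fx x by simp
    next
      case (Suc n)
      have e: "x powr (1 / 2^n) = (x powr (1 / 2^Suc n))^2"
        using x by (simp add: powr_powr[symmetric] power2_eq_square powr_add[symmetric])
      have "1 \<le> x powr (1 / 2^Suc n)" using x by (simp add: ge_one_powr_ge_zero)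
      hence "f (x powr (1 / 2^n)) = (f (x powr (1 / 2^Suc n)))^2"
        using sq[of "x powr (1 / 2^n)"] e by (simp add: real_sqrt_unique)
      thus ?case using Suc by simp
    qed
    have lx: "ln x0 > 0" using x0 by simp
    obtain n :: nat where n: "ln x / ln x0 < 2^n"
      using real_arch_pow[of 2 "ln x / ln x0"] by auto
    have "ln x / 2^n < ln x0" using n lx by (simp add: field_simps)
    hence "exp (1 / 2^n * ln x) < exp (ln x0)" by simp
    hence le: "x powr (1 / 2^n) \<le> x0"
      using x x0 by (simp add: powr_def)
    have "f x0 = 0" by (rule zero_up[OF rt[of n] _ le]) (use x in \<open>simp add: ge_one_powr_ge_zero\<close>)
    thus False using x0 by simp
  qed
  define g where "g y = ln (f (exp y))" for y
  have gadd: "g (a + b) = g a + g b" if "0 \<le> a" "0 \<le> b" for a b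
  proof -
    have "f (exp (a + b)) = f (exp a) * f (exp b)" by (simp add: exp_add mult that)
    thus ?thesis unfolding g_def using posf[of "exp a"] posf[of "exp b"] that by (simp add: ln_mult)
  qed
  have gbnd: "g y \<le> H * y" if "0 \<le> y" for y
  proof -
    have p: "f (exp y) > 0" using posf that by simp
    have "(f (exp y))^2 \<le> exp y powr (2 * H)" using bnd that by simp
    also have "exp y powr (2 * H) = exp (2 * H * y)" by (simp add: powr_def)
    finally have "ln ((f (exp y))^2) \<le> ln (exp (2 * H * y))" using p by (subst ln_le_cancel_iff) auto
    hence "2 * ln (f (exp y)) \<le> 2 * H * y" using p by (simp add: ln_realpow)
    thus ?thesis unfolding g_def by simp
  qed
  define c where "c = g 1"
  define h where "h y = g y - c * y" for y
  have hlin: "h y = 0" if "0 \<le> y" for y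
  proof (rule additive_bounded_linear[where K="\<bar>H\<bar> + \<bar>c\<bar>" and h=h and y=y])
    show "h (a + b) = h a + h b" if "0 \<le> a" "0 \<le> b" for a b
      unfolding h_def using gadd[OF that] by (simp add: algebra_simps)
    show "h 1 = 0" unfolding h_def c_def by simp
    show "h z \<le> \<bar>H\<bar> + \<bar>c\<bar>" if "0 \<le> z" "z \<le> 1" for z
    proof -
      have "g z \<le> H * z" using gbnd that by simp
      also have "\<dots> \<le> \<bar>H\<bar> * z" by (rule mult_right_mono) (use that in auto)
      also have "\<dots> \<le> \<bar>H\<bar>" using that by (simp add: mult_left_le)
      finally have "g z \<le> \<bar>H\<bar>" .
      moreover have "- (c * z) \<le> \<bar>c\<bar> * z"
      proof -
        have "-c * z \<le> \<bar>c\<bar> * z" by (rule mult_right_mono) (use that in auto)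
        thus ?thesis by simp
      qed
      moreover have "\<bar>c\<bar> * z \<le> \<bar>c\<bar>" using that by (simp add: mult_left_le)
      ultimately show ?thesis unfolding h_def by simp
    qed
  qed (use that in auto)
  show ?thesis
  proof (intro exI conjI allI impI)
    show "c \<le> H" using gbnd[of 1] unfolding c_def by simp
    fix x :: real assume x: "1 \<le> x"
    have "g (ln x) = c * ln x" using hlin[of "ln x"] x unfolding h_def by simp
    hence "ln (f x) = c * ln x" unfolding g_def using x by simp
    hence "f x = exp (c * ln x)" using posf[OF x] by (metis exp_ln)
    thus "f x = x powr c" using x by (simp add: powr_def mult.commute)
  qed
qed



lemma gp_int:
  assumes P: "prob_space M" and GP: "gaussian_process M X" and CP: "centered_process M X"
    and pq: "0 \<le> p" "0 \<le> q"
  shows "integrable M (\<lambda>\<omega>. X p \<omega> * X q \<omega>)"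
proof -
  have Xm: "\<And>r. r \<ge> 0 \<Longrightarrow> X r \<in> borel_measurable M" using GP by (simp add: gaussian_process_def)
  have EX: "\<And>r. r \<ge> 0 \<Longrightarrow> integral\<^sup>L M (X r) = 0"
    using CP by (auto simp: centered_process_def)
  have g1: "gaussian_rv M (X r)" if "0 \<le> r" for r
  proof -
    have "gaussian_rv M (\<lambda>\<omega>. \<Sum>i\<in>{r}. (\<lambda>_. 1) i * X i \<omega>)"
      using GP[unfolded gaussian_process_def, THEN conjunct2, rule_format, of "{r}" "\<lambda>_. 1"] that by auto
    thus ?thesis by simp
  qed
  have iX2: "integrable M (\<lambda>\<omega>. (X r \<omega>)^2)" if "0 \<le> r" for r
    using gauss_char(1)[OF P g1[OF that] EX[OF that]] .
  show ?thesis using int_prod[OF iX2[OF pq(1)] iX2[OF pq(2)] Xm[OF pq(1)] Xm[OF pq(2)]] .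
qed

theorem mainTheorem3:
  fixes M :: "'a measure" and X :: "real \<Rightarrow> 'a \<Rightarrow> real" and H :: real and l :: "real \<Rightarrow> real"
  assumes "prob_space M"
    and "H > 0"
    and "l 0 = 1"
    and "\<exists>x>0. l x \<noteq> 0"
    and "gaussian_process M X"
    and "centered_process M X"
    and "self_similar M H X"
    and "integral\<^sup>L M (\<lambda>\<omega>. X 1 \<omega> * X 1 \<omega>) > 0"
    and "\<forall>s>0. \<forall>t>0. integral\<^sup>L M (\<lambda>\<omega>. X s \<omega> * X t \<omega>)
           = integral\<^sup>L M (\<lambda>\<omega>. X 1 \<omega> * X 1 \<omega>) * (min s t) powr (2 * H) * l (\<bar>s - t\<bar> / min s t)"
    and "markov_process M X"
  shows "\<exists>c::real. c \<le> - H \<and>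
           (\<forall>\<alpha>::real. 0 < \<alpha> \<and> \<alpha> < 1 \<longrightarrow>
             (\<forall>t::real. t \<ge> 1 \<longrightarrow>
               l (t powr (1 - \<alpha>) - 1) = t powr (2 * H + c - \<alpha> * (2 * H + c))))"
proof -
  note P = assms(1) and GP = assms(5) and CP = assms(6) and MK = assms(10)
  interpret prob_space M by (fact P)
  define K where "K = integral\<^sup>L M (\<lambda>\<omega>. X 1 \<omega> * X 1 \<omega>)"
  define R where "R s t = integral\<^sup>L M (\<lambda>\<omega>. X s \<omega> * X t \<omega>)" for s t
  have K0: "K > 0" using assms(8) unfolding K_def .
  have cov: "R s t = K * (min s t) powr (2 * H) * l (\<bar>s - t\<bar> / min s t)" if "s > 0" "t > 0" for s t
    using assms(9) that unfolding R_def K_def by blast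
  define f where "f x = l (x - 1)" for x
  have Rd: "R x x = K * x powr (2 * H)" if "x > 0" for x
    using cov[OF that that] assms(3) by simp
  have R1: "R 1 x = K * f x" if "x \<ge> 1" for x
  proof -
    have "R 1 x = K * (min 1 x) powr (2 * H) * l (\<bar>1 - x\<bar> / min 1 x)" using cov that by simp
    also have "min 1 x = 1" using that by simp
    also have "\<bar>1 - x\<bar> = x - 1" using that by simp
    finally show ?thesis unfolding f_def by simp
  qed
  have Rab: "R a (a * b) = K * a powr (2 * H) * f b" if "a \<ge> 1" "b \<ge> 1" for a b
  proof -
    have ab: "a \<le> a * b" using that by (simp add: mult_le_cancel_left1)
    have "R a (a * b) = K * (min a (a * b)) powr (2 * H) * l (\<bar>a - a * b\<bar> / min a (a * b))"
      using cov that by simp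
    also have "min a (a * b) = a" using ab by simp
    also have "\<bar>a - a * b\<bar> / a = b - 1" using ab that by (simp add: field_simps)
    finally show ?thesis unfolding f_def by simp
  qed
  have f1: "f 1 = 1" unfolding f_def using assms(3) by simp
  have mult: "f (a * b) = f a * f b" if ab: "1 \<le> a" "1 \<le> b" for a b
  proof (cases "a = 1 \<or> b = 1")
    case True thus ?thesis using f1 by auto
  next
    case False
    hence a1: "1 < a" and b1: "1 < b" using ab by auto
    have aab: "a < a * b" using a1 b1 by simp
    have fac: "R 1 (a * b) * R a a = R 1 a * R a (a * b)"
      unfolding R_def
      by (rule factorization[OF P GP CP MK, of 1 a "a * b"]) (use a1 aab Rd[of a] K0 in \<open>auto simp: R_def\<close>)
    have ab1: "1 \<le> a * b" using aab a1 by linarith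
    have e: "(K * (K * a powr (2 * H))) * f (a * b) = (K * (K * a powr (2 * H))) * (f a * f b)"
      using fac R1[OF ab1] R1[of a] Rd[of a] Rab[of a b] a1 b1 by (simp add: algebra_simps)
    moreover have "K * (K * a powr (2 * H)) \<noteq> 0" using K0 a1 by simp
    ultimately show ?thesis by simp
  qed
  have bnd: "(f x)^2 \<le> x powr (2 * H)" if x: "1 \<le> x" for x
  proof -
    have Xm: "\<And>r. r \<ge> 0 \<Longrightarrow> X r \<in> borel_measurable M" using GP by (simp add: gaussian_process_def)
    have x0: "0 \<le> x" using x by simp
    note ii = gp_int[OF P GP CP]
    define a where "a = R 1 x"
    have "0 \<le> (\<integral>\<omega>. (a * X 1 \<omega> - K * X x \<omega>)^2 \<partial>M)" by simp
    also have "(\<lambda>\<omega>. (a * X 1 \<omega> - K * X x \<omega>)^2) = (\<lambda>\<omega>. a^2 * (X 1 \<omega> * X 1 \<omega>) - (2 * a * K) * (X 1 \<omega> * X x \<omega>) + K^2 * (X x \<omega> * X x \<omega>))"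
      by (auto simp: power2_eq_square algebra_simps)
    also have "(\<integral>\<omega>. a^2 * (X 1 \<omega> * X 1 \<omega>) - (2 * a * K) * (X 1 \<omega> * X x \<omega>) + K^2 * (X x \<omega> * X x \<omega>) \<partial>M)
        = a^2 * K - (2 * a * K) * a + K^2 * R x x"
      using ii[of 1 1] ii[of 1 x] ii[of x x] x0 unfolding a_def R_def K_def by simp
    finally have "0 \<le> K * (K * R x x - a^2)" by (simp add: power2_eq_square algebra_simps)
    hence "a^2 \<le> K * R x x" using K0 by (simp add: zero_le_mult_iff)
    hence "K^2 * (f x)^2 \<le> K^2 * x powr (2 * H)" unfolding a_def using R1[OF x] Rd[of x] x
      by (simp add: power2_eq_square algebra_simps)
    thus ?thesis using K0 by simp
  qed
  have nz: "\<exists>x>1. f x \<noteq> 0"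
  proof -
    obtain y where "y > 0" "l y \<noteq> 0" using assms(4) by blast
    thus ?thesis unfolding f_def by (intro exI[of _ "y + 1"]) auto
  qed
  obtain d where d: "d \<le> H" "\<And>x. x \<ge> 1 \<Longrightarrow> f x = x powr d"
    using mult_fun_solve[of f H, OF mult bnd nz] by blast
  show ?thesis
  proof (intro exI[of _ "d - 2 * H"] conjI allI impI)
    show "d - 2 * H \<le> - H" using d by simp
    fix \<alpha> t :: real assume a: "0 < \<alpha> \<and> \<alpha> < 1" and t: "1 \<le> t"
    have ge: "1 \<le> t powr (1 - \<alpha>)" using a t by (simp add: ge_one_powr_ge_zero)
    have "l (t powr (1 - \<alpha>) - 1) = f (t powr (1 - \<alpha>))" unfolding f_def by simp
    also have "\<dots> = (t powr (1 - \<alpha>)) powr d" using d(2)[OF ge] .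
    also have "\<dots> = t powr ((1 - \<alpha>) * d)" using t by (simp add: powr_powr)
    also have "(1 - \<alpha>) * d = 2 * H + (d - 2 * H) - \<alpha> * (2 * H + (d - 2 * H))" by (simp add: algebra_simps)
    finally show "l (t powr (1 - \<alpha>) - 1) = t powr (2 * H + (d - 2 * H) - \<alpha> * (2 * H + (d - 2 * H)))" .
  qed
qed


end
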